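(* Let $G$ be a connected graph with vertex set $\{u_1,\dots,u_n\}$, $n\ge2$, and let $\mathcal{H}=\{H_1,\dots,H_n\}$ be a family of graphs. Then $\dim_l(G\circ\mathcal{H})=\sum_{i=1}^n\operatorname{adim}_l(H_i)$ if and only if (a) for every two adjacent vertices $u_i,u_j\in I$ not belonging to the same true twin equivalence class of $G$ there exists $u\in V(G)-(V_E\cup\{u_i,u_j\})$ with $d_G(u,u_i)\ne d_G(u,u_j)$, and (b) each true twin equivalence class of $G$ contains at most one vertex $u_i$ with $H_i\in\mathcal{G}$.
   Context: All graphs are finite and simple with at least one vertex. $d_G$ is shortest-path distance ($+\infty$ between components), $d_{G,2}=\min\{d_G,2\}$; $s$ distinguishes $x,y$ w.r.t. $d$ if $d(s,x)\ne d(s,y)$. $\dim_l(G)$: minimum size of $S\subseteq V(G)$ such that any two adjacent vertices are distinguished w.r.t. $d_G$ by some vertex of $S$. $\operatorname{adim}_l(H)$: minimum size of $S\subseteq V(H)$ such that any two adjacent vertices are distinguished w.r.t. $d_{H,2}$ by some vertex of $S$; minimum such sets are local adjacency bases. $\Phi$: class of edgeless graphs. $\mathcal{G}$: class of graphs $H$ such that every local adjacency basis $B$ of $H$ satisfies $B\subseteq N_H(v)$ for some $v\in V(H)$. True twins: $N[x]=N[y]$; $T(G)$ is the union of the non-singleton true twin equivalence classes of $G$. $V_E=\{u_i\in V(G)-T(G): H_i\in\Phi\}$, $I=\{u_i\in V(G): H_i\in\mathcal{G}\}$. Lexicographic product $G\circ\mathcal{H}$: vertex set $\bigcup_i\{u_i\}\times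 V(H_i)$, $(u_i,v)\sim(u_j,w)$ iff $u_iu_j\in E(G)$, or $i=j$ and $vw\in E(H_i)$. *)

theory Defs
  imports Main "HOL-Library.Extended_Nat"
begin

definition graph :: "'a set \<Rightarrow> ('a \<Rightarrow> 'a \<Rightarrow> bool) \<Rightarrow> bool" where
  "graph V E \<longleftrightarrow> finite V \<and> V \<noteq> {} \<and>
     (\<forall>x y. E x y \<longrightarrow> x \<in> V \<and> y \<in> V) \<and>
     (\<forall>x y. E x y \<longrightarrow> E y x) \<and> (\<forall>x. \<not> E x x)"

definition walk :: "'a set \<Rightarrow> ('a \<Rightarrow> 'a \<Rightarrow> bool) \<Rightarrow> nat \<Rightarrow> 'a \<Rightarrow> 'a \<Rightarrow> bool" where
  "walk V E n x y \<longleftrightarrow> (\<exists>p::nat \<Rightarrow> 'a. p 0 = x \<and> p n = y \<and> (\<forall>i\<le>n. p i \<in> V) \<and>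
      (\<forall>i<n. E (p i) (p (Suc i))))"

text \<open>Shortest-path distance d_G, equal to infinity between components.\<close>
definition gdist :: "'a set \<Rightarrow> ('a \<Rightarrow> 'a \<Rightarrow> bool) \<Rightarrow> 'a \<Rightarrow> 'a \<Rightarrow> enat" where
  "gdist V E x y = (INF n \<in> {n. walk V E n x y}. enat n)"

definition connected_graph :: "'a set \<Rightarrow> ('a \<Rightarrow> 'a \<Rightarrow> bool) \<Rightarrow> bool" where
  "connected_graph V E \<longleftrightarrow> graph V E \<and> (\<forall>x\<in>V. \<forall>y\<in>V. gdist V E x y \<noteq> \<infinity>)"

definition gdist2 :: "'a set \<Rightarrow> ('a \<Rightarrow> 'a \<Rightarrow> bool) \<Rightarrow> 'a \<Rightarrow> 'a \<Rightarrow> enat" where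
  "gdist2 V E x y = min (gdist V E x y) 2"

definition local_resolving :: "'a set \<Rightarrow> ('a \<Rightarrow> 'a \<Rightarrow> bool) \<Rightarrow> ('a \<Rightarrow> 'a \<Rightarrow> enat) \<Rightarrow> 'a set \<Rightarrow> bool" where
  "local_resolving V E d S \<longleftrightarrow> S \<subseteq> V \<and>
     (\<forall>x\<in>V. \<forall>y\<in>V. E x y \<longrightarrow> (\<exists>s\<in>S. d s x \<noteq> d s y))"

definition local_metric_dim :: "'a set \<Rightarrow> ('a \<Rightarrow> 'a \<Rightarrow> bool) \<Rightarrow> nat" where
  "local_metric_dim V E = (LEAST k. \<exists>S. local_resolving V E (gdist V E) S \<and> card S = k)"

definition local_adj_dim :: "'a set \<Rightarrow> ('a \<Rightarrow> 'a \<Rightarrow> bool) \<Rightarrow> nat" where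
  "local_adj_dim V E = (LEAST k. \<exists>S. local_resolving V E (gdist2 V E) S \<and> card S = k)"

definition local_adj_basis :: "'a set \<Rightarrow> ('a \<Rightarrow> 'a \<Rightarrow> bool) \<Rightarrow> 'a set \<Rightarrow> bool" where
  "local_adj_basis V E B \<longleftrightarrow> local_resolving V E (gdist2 V E) B \<and> card B = local_adj_dim V E"

definition open_nbhd :: "'a set \<Rightarrow> ('a \<Rightarrow> 'a \<Rightarrow> bool) \<Rightarrow> 'a \<Rightarrow> 'a set" where
  "open_nbhd V E v = {w\<in>V. E v w}"

definition closed_nbhd :: "'a set \<Rightarrow> ('a \<Rightarrow> 'a \<Rightarrow> bool) \<Rightarrow> 'a \<Rightarrow> 'a set" where
  "closed_nbhd V E v = insert v (open_nbhd V E v)"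

definition edgeless :: "'a set \<Rightarrow> ('a \<Rightarrow> 'a \<Rightarrow> bool) \<Rightarrow> bool" where
  "edgeless V E \<longleftrightarrow> (\<forall>x\<in>V. \<forall>y\<in>V. \<not> E x y)"

definition class_G :: "'a set \<Rightarrow> ('a \<Rightarrow> 'a \<Rightarrow> bool) \<Rightarrow> bool" where
  "class_G V E \<longleftrightarrow> (\<forall>B. local_adj_basis V E B \<longrightarrow> (\<exists>v\<in>V. B \<subseteq> open_nbhd V E v))"

definition true_twins :: "'a set \<Rightarrow> ('a \<Rightarrow> 'a \<Rightarrow> bool) \<Rightarrow> 'a \<Rightarrow> 'a \<Rightarrow> bool" where
  "true_twins V E x y \<longleftrightarrow> closed_nbhd V E x = closed_nbhd V E y"

definition twin_class :: "'a set \<Rightarrow> ('a \<Rightarrow> 'a \<Rightarrow> bool) \<Rightarrow> 'a \<Rightarrow> 'a set" where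
  "twin_class V E x = {y\<in>V. true_twins V E x y}"

definition twin_set :: "'a set \<Rightarrow> ('a \<Rightarrow> 'a \<Rightarrow> bool) \<Rightarrow> 'a set" where
  "twin_set V E = \<Union>{twin_class V E x |x. x \<in> V \<and> card (twin_class V E x) \<ge> 2}"

text \<open>Lexicographic product G \<circ> H, with G indexed by its own vertices.\<close>
definition lex_V :: "'a set \<Rightarrow> ('a \<Rightarrow> 'b set) \<Rightarrow> ('a \<times> 'b) set" where
  "lex_V V HV = Sigma V HV"

definition lex_E :: "'a set \<Rightarrow> ('a \<Rightarrow> 'a \<Rightarrow> bool) \<Rightarrow> ('a \<Rightarrow> 'b set) \<Rightarrow> ('a \<Rightarrow> 'b \<Rightarrow> 'b \<Rightarrow> bool)
    \<Rightarrow> ('a \<times> 'b) \<Rightarrow> ('a \<times> 'b) \<Rightarrow> bool" where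
  "lex_E V E HV HE x y \<longleftrightarrow> x \<in> lex_V V HV \<and> y \<in> lex_V V HV \<and>
     (E (fst x) (fst y) \<or> (fst x = fst y \<and> HE (fst x) (snd x) (snd y)))"

end

theory Submission
  imports Defs
begin



lemma walk_0: "walk V E 0 x y \<longleftrightarrow> x = y \<and> x \<in> V"
proof
  assume "walk V E 0 x y" then show "x = y \<and> x \<in> V" unfolding walk_def by auto
next
  assume "x = y \<and> x \<in> V" then show "walk V E 0 x y" unfolding walk_def
    by (intro exI[of _ "\<lambda>_. x"]) auto
qed

lemma walk_Suc: "walk V E (Suc n) x z \<longleftrightarrow> (\<exists>y. walk V E n x y \<and> E y z \<and> z \<in> V)"
proof
  assume "walk V E (Suc n) x z"
  then obtain p where p: "p 0 = x" "p (Suc n) = z" "\<forall>i\<le>Suc n. p i \<in> V" "\<forall>i<Suc n. E (p i) (p (Suc i))"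
    unfolding walk_def by blast
  have "walk V E n x (p n)" unfolding walk_def using p by (intro exI[of _ p]) auto
  moreover have "E (p n) z" using p by auto
  moreover have "z \<in> V" using p by auto
  ultimately show "\<exists>y. walk V E n x y \<and> E y z \<and> z \<in> V" by blast
next
  assume "\<exists>y. walk V E n x y \<and> E y z \<and> z \<in> V"
  then obtain y p where p: "p 0 = x" "p n = y" "\<forall>i\<le>n. p i \<in> V" "\<forall>i<n. E (p i) (p (Suc i))"
    and yz: "E y z" "z \<in> V" unfolding walk_def by blast
  show "walk V E (Suc n) x z" unfolding walk_def
  proof (intro exI[of _ "p(Suc n := z)"] conjI allI impI)
    show "(p(Suc n := z)) 0 = x" using p by simp
    show "(p(Suc n := z)) (Suc n) = z" by simp
    fix i assume "i \<le> Suc n" then show "(p(Suc n := z)) i \<in> V" using p yz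
      by (cases "i = Suc n") auto
  next
    fix i assume i: "i < Suc n"
    show "E ((p(Suc n := z)) i) ((p(Suc n := z)) (Suc i))"
    proof (cases "i = n")
      case True then show ?thesis using p yz by simp
    next
      case False then show ?thesis using p i by simp
    qed
  qed
qed

lemma walk_1: "walk V E (Suc 0) x y \<longleftrightarrow> x \<in> V \<and> E x y \<and> y \<in> V"
  by (auto simp: walk_Suc walk_0)

lemma walk_sym:
  assumes sym: "\<forall>x y. E x y \<longrightarrow> E y x" and w: "walk V E n x y"
  shows "walk V E n y x"
proof -
  obtain p where p: "p 0 = x" "p n = y" "\<forall>i\<le>n. p i \<in> V" "\<forall>i<n. E (p i) (p (Suc i))"
    using w unfolding walk_def by blast
  show ?thesis unfolding walk_def
  proof (intro exI[of _ "\<lambda>i. p (n - i)"] conjI allI impI)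
    show "p (n - 0) = y" using p by simp
    show "p (n - n) = x" using p by simp
    fix i assume "i \<le> n" then show "p (n - i) \<in> V" using p by auto
  next
    fix i assume i: "i < n"
    have "E (p (n - Suc i)) (p (Suc (n - Suc i)))" using p i by auto
    moreover have "Suc (n - Suc i) = n - i" using i by simp
    ultimately show "E (p (n - i)) (p (n - Suc i))" using sym by metis
  qed
qed

lemma walk_first:
  assumes sym: "\<forall>x y. E x y \<longrightarrow> E y x"
  shows "walk V E (Suc m) x z \<longleftrightarrow> (\<exists>y. x \<in> V \<and> E x y \<and> walk V E m y z)"
proof
  assume "walk V E (Suc m) x z"
  then have "walk V E (Suc m) z x" using walk_sym[OF sym] by blast
  then obtain y where "walk V E m z y" "E y x" "x \<in> V" by (auto simp: walk_Suc)
  then show "\<exists>y. x \<in> V \<and> E x y \<and> walk V E m y z" using walk_sym[OF sym] sym by blast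
next
  assume "\<exists>y. x \<in> V \<and> E x y \<and> walk V E m y z"
  then obtain y where "x \<in> V" "E x y" "walk V E m y z" by blast
  then have "walk V E m z y" "E y x" using walk_sym[OF sym] sym by auto
  then have "walk V E (Suc m) z x" using \<open>x \<in> V\<close> by (auto simp: walk_Suc)
  then show "walk V E (Suc m) x z" using walk_sym[OF sym] by blast
qed

lemma gdist_le: "walk V E n x y \<Longrightarrow> gdist V E x y \<le> enat n"
  unfolding gdist_def by (rule INF_lower) simp

lemma gdist_ge: "(\<And>n. walk V E n x y \<Longrightarrow> d \<le> enat n) \<Longrightarrow> d \<le> gdist V E x y"
  unfolding gdist_def by (rule INF_greatest) simp

lemma gdist_eq: "walk V E n x y \<Longrightarrow> (\<And>m. m < n \<Longrightarrow> \<not> walk V E m x y) \<Longrightarrow> gdist V E x y = enat n"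
  apply (rule antisym)
   apply (erule gdist_le)
  apply (rule gdist_ge)
  by (metis enat_ord_simps(1) not_le)

lemma gdist_fin: "gdist V E x y \<noteq> \<infinity> \<Longrightarrow> \<exists>n. walk V E n x y"
  unfolding gdist_def by (auto simp: top_enat_def[symmetric])

lemma gdist_sym: "\<forall>x y. E x y \<longrightarrow> E y x \<Longrightarrow> gdist V E x y = gdist V E y x"
  by (rule antisym; rule gdist_ge; metis gdist_le walk_sym)

lemma gdist_self: "x \<in> V \<Longrightarrow> gdist V E x x = 0"
  using gdist_eq[of V E 0 x x] by (simp add: walk_0 zero_enat_def)

lemma gdist_ne: "x \<noteq> y \<Longrightarrow> 1 \<le> gdist V E x y"
  apply (rule gdist_ge)
  by (metis One_nat_def Suc_leI enat_ord_simps(1) neq0_conv one_enat_def walk_0)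

lemma gdist_1: "x \<in> V \<Longrightarrow> y \<in> V \<Longrightarrow> E x y \<Longrightarrow> x \<noteq> y \<Longrightarrow> gdist V E x y = 1"
  using gdist_eq[of V E "Suc 0" x y] by (auto simp: walk_0 walk_1 one_enat_def)

lemma gdist2_val:
  assumes g: "graph H F" and c: "c \<in> H" and a: "a \<in> H"
  shows "gdist2 H F c a = (if c = a then 0 else if F c a then 1 else 2)"
proof -
  have irr: "\<not> F x x" for x using g by (auto simp: graph_def)
  show ?thesis
  proof (cases "c = a")
    case True then show ?thesis using gdist_self[OF c] by (simp add: gdist2_def)
  next
    case ne: False
    show ?thesis
    proof (cases "F c a")
      case True then show ?thesis using ne gdist_1[OF c a] by (simp add: gdist2_def)
    next
      case False
      have "2 \<le> gdist H F c a"
      proof (rule gdist_ge)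
        fix n assume w: "walk H F n c a"
        have "n \<noteq> 0" using w ne walk_0 by metis
        moreover have "n \<noteq> 1" using w False walk_1 One_nat_def by metis
        ultimately have "2 \<le> n" by simp
        then show "2 \<le> enat n" by (simp add: numeral_eq_enat)
      qed
      then show ?thesis using ne False by (simp add: gdist2_def min_def)
    qed
  qed
qed

lemma self_res_2: "graph H F \<Longrightarrow> local_resolving H F (gdist2 H F) H"
  unfolding local_resolving_def
  apply (auto simp: gdist2_val)
  by (metis graph_def zero_neq_one)

lemma self_res: "(\<forall>x. \<not> F x x) \<Longrightarrow> local_resolving H F (gdist H F) H"
  unfolding local_resolving_def
  apply clarsimp
  by (metis gdist_ne gdist_self not_one_le_zero)




definition sec :: "('a \<times> 'b) set \<Rightarrow> 'a \<Rightarrow> 'b set" where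
  "sec S i = {c. (i, c) \<in> S}"

lemma adim_le: "local_resolving H F (gdist2 H F) T \<Longrightarrow> local_adj_dim H F \<le> card T"
  unfolding local_adj_dim_def by (rule Least_le) blast

lemma edgeless_basis_empty:
  assumes g: "graph H F" and el: "edgeless H F" and b: "local_adj_basis H F B"
  shows "B = {}"
proof -
  have EH: "F x y \<Longrightarrow> x \<in> H \<and> y \<in> H" for x y using g by (simp add: graph_def)
  have "local_resolving H F (gdist2 H F) {}" 
    unfolding local_resolving_def
  proof (intro conjI ballI impI)
    fix x y assume "x \<in> H" "y \<in> H" "F x y"
    then show "\<exists>s\<in>{}. gdist2 H F s x \<noteq> gdist2 H F s y" using el by (simp add: edgeless_def)
  qed simp
  then have "local_adj_dim H F \<le> 0" using adim_le by fastforce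
  moreover have "B \<subseteq> H" using b by (simp add: local_adj_basis_def local_resolving_def)
  then have "finite B" using g by (simp add: graph_def finite_subset)
  ultimately show ?thesis using b by (simp add: local_adj_basis_def)
qed

lemma nonedgeless_basis_ne:
  assumes ne: "\<not> edgeless H F" and b: "local_adj_basis H F B"
  shows "B \<noteq> {}"
proof
  assume B: "B = {}"
  obtain x y where "x \<in> H" "y \<in> H" "F x y" using ne by (auto simp: edgeless_def)
  then show False using b B by (simp add: local_adj_basis_def local_resolving_def)
qed

lemma edgeless_classG: assumes g: "graph H F" and el: "edgeless H F" shows "class_G H F"
  unfolding class_G_def
proof (intro allI impI)
  fix B assume "local_adj_basis H F B"
  then have "B = {}" using edgeless_basis_empty[OF g el] by simp
  moreover obtain v where "v \<in> H" using g by (auto simp: graph_def)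
  ultimately show "\<exists>v\<in>H. B \<subseteq> open_nbhd H F v" by auto
qed

lemma basis_ex: assumes g: "graph H F" shows "\<exists>B. local_adj_basis H F B"
proof -
  have "\<exists>k S. local_resolving H F (gdist2 H F) S \<and> card S = k" using self_res_2[OF g] by blast
  from LeastI_ex[OF this] have "\<exists>S. local_resolving H F (gdist2 H F) S \<and> card S = local_adj_dim H F"
    unfolding local_adj_dim_def .
  then show ?thesis by (simp add: local_adj_basis_def)
qed




lemma tt_adj: "true_twins V E x y \<Longrightarrow> x \<noteq> y \<Longrightarrow> y \<in> V \<Longrightarrow> E x y"
proof -
  assume tt: "true_twins V E x y" and ne: "x \<noteq> y" and y: "y \<in> V"
  have "y \<in> closed_nbhd V E y" by (simp add: closed_nbhd_def)
  then have "y \<in> closed_nbhd V E x" using tt by (simp add: true_twins_def)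
  then show "E x y" using ne by (simp add: closed_nbhd_def open_nbhd_def)
qed

lemma twin_dist_le:
  assumes g: "graph V E" and tt: "true_twins V E u u'" and xu: "x \<noteq> u" and xu': "x \<noteq> u'"
  shows "gdist V E u' x \<le> gdist V E u x"
proof (rule gdist_ge)
  have sym: "\<forall>x y. E x y \<longrightarrow> E y x" and EV: "\<forall>x y. E x y \<longrightarrow> x \<in> V \<and> y \<in> V"
    using g by (auto simp: graph_def)
  fix n assume w: "walk V E n u x"
  then obtain m where n: "n = Suc m" using xu by (metis walk_0 not0_implies_Suc)
  then obtain y where y: "E u y" "walk V E m y x" using w walk_first[OF sym] by blast
  have "y \<in> closed_nbhd V E u" using y EV unfolding closed_nbhd_def open_nbhd_def by auto
  then have "y \<in> closed_nbhd V E u'" using tt unfolding true_twins_def by simp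
  then have "y = u' \<or> (u' \<in> V \<and> E u' y)" using EV unfolding closed_nbhd_def open_nbhd_def by auto
  then show "gdist V E u' x \<le> enat n"
  proof
    assume "y = u'"
    then have "gdist V E u' x \<le> enat m" using y gdist_le by metis
    then show ?thesis using n by (simp add: order_trans)
  next
    assume "u' \<in> V \<and> E u' y"
    then have "walk V E n u' x" using n y walk_first[OF sym] by blast
    then show ?thesis by (rule gdist_le)
  qed
qed

lemma twin_dist:
  assumes g: "graph V E" and tt: "true_twins V E u u'" and xu: "x \<noteq> u" and xu': "x \<noteq> u'"
  shows "gdist V E u x = gdist V E u' x"
proof -
  have tt': "true_twins V E u' u" using tt by (simp add: true_twins_def)
  show ?thesis using twin_dist_le[OF g tt xu xu'] twin_dist_le[OF g tt' xu' xu] by (rule antisym[rotated])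
qed



locale lexprod =
  fixes V :: "'a set" and E and HV :: "'a \<Rightarrow> 'b set" and HE
  assumes conn: "connected_graph V E" and c2: "card V \<ge> 2" and Hg: "\<forall>u\<in>V. graph (HV u) (HE u)"
begin

lemma gG: "graph V E" using conn by (simp add: connected_graph_def)
lemma finV: "finite V" using gG by (simp add: graph_def)
lemma Esym: "\<forall>x y. E x y \<longrightarrow> E y x" using gG by (simp add: graph_def)
lemma EV: "E x y \<Longrightarrow> x \<in> V \<and> y \<in> V" using gG by (simp add: graph_def)
lemma Eirr: "\<not> E x x" using gG by (simp add: graph_def)
lemma HVne: "i \<in> V \<Longrightarrow> HV i \<noteq> {}" using Hg by (simp add: graph_def)
lemma HVfin: "i \<in> V \<Longrightarrow> finite (HV i)" using Hg by (simp add: graph_def)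
lemma HEsym: "i \<in> V \<Longrightarrow> HE i a b \<Longrightarrow> HE i b a" using Hg by (simp add: graph_def)
lemma HEirr: "i \<in> V \<Longrightarrow> \<not> HE i a a" using Hg by (simp add: graph_def)

lemma nbr: assumes i: "i \<in> V" shows "\<exists>j. E i j"
proof -
  have "\<not> V \<subseteq> {i}" 
  proof
    assume "V \<subseteq> {i}"
    then have "card V \<le> card {i}" by (intro card_mono) auto
    then show False using c2 by simp
  qed
  then obtain j where j: "j \<in> V" "j \<noteq> i" by blast
  then have "gdist V E i j \<noteq> \<infinity>" using conn i by (simp add: connected_graph_def)
  then have "\<exists>n. walk V E n i j" by (rule gdist_fin)
  then obtain n where w: "walk V E n i j" by blast
  then obtain m where "n = Suc m" using j by (metis walk_0 not0_implies_Suc)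
  then show ?thesis using w walk_first[OF Esym] by blast
qed

lemma PE_iff: "lex_E V E HV HE (i, a) (j, b) \<longleftrightarrow> i \<in> V \<and> a \<in> HV i \<and> j \<in> V \<and> b \<in> HV j \<and>
   (E i j \<or> (i = j \<and> HE i a b))"
  by (auto simp: lex_E_def lex_V_def)

lemma PE_irr: "\<not> lex_E V E HV HE x x"
  using Eirr HEirr by (cases x) (auto simp: PE_iff)

end




context lexprod begin

lemma Pwalk_proj: "walk (lex_V V HV) (lex_E V E HV HE) n x y \<Longrightarrow> \<exists>m\<le>n. walk V E m (fst x) (fst y)"
proof (induction n arbitrary: y)
  case 0 then show ?case by (auto simp: walk_0 lex_V_def)
next
  case (Suc n)
  then obtain y' where y': "walk (lex_V V HV) (lex_E V E HV HE) n x y'" "lex_E V E HV HE y' y"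
    by (auto simp: walk_Suc)
  then obtain m where m: "m \<le> n" "walk V E m (fst x) (fst y')" using Suc.IH by blast
  show ?case
  proof (cases "E (fst y') (fst y)")
    case True
    then have "walk V E (Suc m) (fst x) (fst y)" using m EV by (auto simp: walk_Suc)
    then show ?thesis using m by (intro exI[of _ "Suc m"]) auto
  next
    case False
    then have "fst y' = fst y" using y'(2) by (auto simp: lex_E_def)
    then show ?thesis using m by (intro exI[of _ m]) auto
  qed
qed

lemma Gwalk_lift: "walk V E n k i \<Longrightarrow> 1 \<le> n \<Longrightarrow> c \<in> HV k \<Longrightarrow> a \<in> HV i \<Longrightarrow>
   walk (lex_V V HV) (lex_E V E HV HE) n (k, c) (i, a)"
proof (induction n arbitrary: i a)
  case 0 then show ?case by simp
next
  case (Suc n)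
  then obtain y where y: "walk V E n k y" "E y i" "i \<in> V" by (auto simp: walk_Suc)
  show ?case
  proof (cases n)
    case 0
    then have "y = k" "k \<in> V" using y by (auto simp: walk_0)
    then show ?thesis using Suc.prems y 0
      by (auto simp: walk_1 PE_iff lex_V_def)
  next
    case (Suc n')
    have yV: "y \<in> V" using EV y by blast
    then obtain d where d: "d \<in> HV y" using HVne by blast
    have "walk (lex_V V HV) (lex_E V E HV HE) n (k, c) (y, d)" using Suc.IH[OF y(1)] Suc.prems d Suc by auto
    moreover have "lex_E V E HV HE (y, d) (i, a)" using y yV d Suc.prems by (auto simp: PE_iff)
    ultimately show ?thesis using y Suc.prems by (auto simp: walk_Suc lex_V_def)
  qed
qed

end



context lexprod begin
lemma dP_diff:
  assumes k: "k \<in> V" and i: "i \<in> V" and ki: "k \<noteq> i" and c: "c \<in> HV k" and a: "a \<in> HV i"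
  shows "gdist (lex_V V HV) (lex_E V E HV HE) (k, c) (i, a) = gdist V E k i"
proof (rule antisym)
  show "gdist (lex_V V HV) (lex_E V E HV HE) (k, c) (i, a) \<le> gdist V E k i"
  proof (rule gdist_ge)
    fix n assume w: "walk V E n k i"
    then have "1 \<le> n" using ki by (metis less_one not_le walk_0)
    then show "gdist (lex_V V HV) (lex_E V E HV HE) (k, c) (i, a) \<le> enat n"
      using gdist_le[OF Gwalk_lift[OF w _ c a]] by blast
  qed
next
  show "gdist V E k i \<le> gdist (lex_V V HV) (lex_E V E HV HE) (k, c) (i, a)"
  proof (rule gdist_ge)
    fix n assume "walk (lex_V V HV) (lex_E V E HV HE) n (k, c) (i, a)"
    then obtain m where "m \<le> n" "walk V E m k i" using Pwalk_proj by fastforce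
    then show "gdist V E k i \<le> enat n" using gdist_le by (metis enat_ord_simps(1) order_trans)
  qed
qed

end



context lexprod begin
lemma dP_same:
  assumes i: "i \<in> V" and c: "c \<in> HV i" and a: "a \<in> HV i"
  shows "gdist (lex_V V HV) (lex_E V E HV HE) (i, c) (i, a) = gdist2 (HV i) (HE i) c a"
proof -
  have cP: "(i, c) \<in> lex_V V HV" "(i, a) \<in> lex_V V HV" using i c a by (auto simp: lex_V_def)
  have w0: "walk (lex_V V HV) (lex_E V E HV HE) 0 (i, c) (i, a) \<longleftrightarrow> c = a" using cP by (auto simp: walk_0)
  have w1: "walk (lex_V V HV) (lex_E V E HV HE) (Suc 0) (i, c) (i, a) \<longleftrightarrow> HE i c a"
    using cP i c a Eirr by (auto simp: walk_1 PE_iff)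
  have rhs: "gdist2 (HV i) (HE i) c a = (if c = a then 0 else if HE i c a then 1 else 2)"
    using gdist2_val[OF Hg[rule_format, OF i] c a] .
  show ?thesis
  proof (cases "c = a")
    case True then show ?thesis using rhs gdist_self[OF cP(1)] by simp
  next
    case ne: False
    show ?thesis
    proof (cases "HE i c a")
      case True
      have "gdist (lex_V V HV) (lex_E V E HV HE) (i, c) (i, a) = enat (Suc 0)"
        by (rule gdist_eq) (use w0 w1 True ne in auto)
      then show ?thesis using rhs ne True by (simp add: one_enat_def)
    next
      case False
      obtain j where j: "E i j" using nbr i by blast
      then have jV: "j \<in> V" using EV by blast
      then obtain d where d: "d \<in> HV j" using HVne by blast
      have "walk (lex_V V HV) (lex_E V E HV HE) (Suc 0) (i, c) (j, d)"
        using i c j jV d by (auto simp: walk_1 PE_iff lex_V_def)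
      moreover have "lex_E V E HV HE (j, d) (i, a)" using i a j jV d Esym[rule_format, OF j] by (simp add: PE_iff)
      ultimately have w2: "walk (lex_V V HV) (lex_E V E HV HE) (Suc (Suc 0)) (i, c) (i, a)"
        using cP walk_Suc[of "lex_V V HV" "lex_E V E HV HE" "Suc 0" "(i, c)" "(i, a)"] by blast
      have "gdist (lex_V V HV) (lex_E V E HV HE) (i, c) (i, a) = enat (Suc (Suc 0))"
      proof (rule gdist_eq[OF w2])
        fix m assume "m < Suc (Suc 0)"
        then have "m = 0 \<or> m = Suc 0" by auto
        then show "\<not> walk (lex_V V HV) (lex_E V E HV HE) m (i, c) (i, a)" using w0 w1 ne False by auto
      qed
      then show ?thesis using rhs ne False by (simp add: numeral_eq_enat)
    qed
  qed
qed

end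




context lexprod begin

lemma P_mem: "(k, c) \<in> lex_V V HV \<longleftrightarrow> k \<in> V \<and> c \<in> HV k"
  by (simp add: lex_V_def)

lemma cross:
  assumes i: "i \<in> V" and j: "j \<in> V" and ij: "E i j" and a: "a \<in> HV i" and b: "b \<in> HV j"
    and k: "k \<in> V" and c: "c \<in> HV k"
  shows "gdist (lex_V V HV) (lex_E V E HV HE) (k, c) (i, a) \<noteq> gdist (lex_V V HV) (lex_E V E HV HE) (k, c) (j, b)
    \<longleftrightarrow> (k \<noteq> i \<and> k \<noteq> j \<and> gdist V E k i \<noteq> gdist V E k j) \<or> (k = i \<and> \<not> HE i c a) \<or> (k = j \<and> \<not> HE j c b)"
proof -
  have ne: "i \<noteq> j" using ij Eirr by blast
  have ji: "E j i" using Esym ij by blast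
  have g1: "gdist V E i j = 1" using gdist_1[where V=V and E=E, OF i j ij ne] .
  have g2: "gdist V E j i = 1" using gdist_1[where V=V and E=E, OF j i ji] ne by blast
  show ?thesis
  proof (cases "k = i")
    case True
    have d1: "gdist (lex_V V HV) (lex_E V E HV HE) (k, c) (i, a) = (if c = a then 0 else if HE i c a then 1 else 2)"
      using dP_same[OF i _ a] c True gdist2_val[OF Hg[rule_format, OF i] _ a] by simp
    have d2: "gdist (lex_V V HV) (lex_E V E HV HE) (k, c) (j, b) = 1"
      using dP_diff[OF k j _ c b] True ne g1 by simp
    have "\<not> HE i a a" using HEirr[OF i] .
    then show ?thesis using d1 d2 True ne by auto
  next
    case ki: False
    show ?thesis
    proof (cases "k = j")
      case True
      have d1: "gdist (lex_V V HV) (lex_E V E HV HE) (k, c) (j, b) = (if c = b then 0 else if HE j c b then 1 else 2)"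
        using dP_same[OF j _ b] c True gdist2_val[OF Hg[rule_format, OF j] _ b] by simp
      have d2: "gdist (lex_V V HV) (lex_E V E HV HE) (k, c) (i, a) = 1"
        using dP_diff[OF k i _ c a] True ne g2 by simp
      have "\<not> HE j b b" using HEirr[OF j] .
      then show ?thesis using d1 d2 True ne by auto
    next
      case False
      then show ?thesis using dP_diff[OF k i ki c a] dP_diff[OF k j False c b] ki by simp
    qed
  qed
qed

lemma same:
  assumes i: "i \<in> V" and a: "a \<in> HV i" and b: "b \<in> HV i" and k: "k \<in> V" and c: "c \<in> HV k"
  shows "gdist (lex_V V HV) (lex_E V E HV HE) (k, c) (i, a) \<noteq> gdist (lex_V V HV) (lex_E V E HV HE) (k, c) (i, b)
    \<longleftrightarrow> k = i \<and> gdist2 (HV i) (HE i) c a \<noteq> gdist2 (HV i) (HE i) c b"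
proof (cases "k = i")
  case True then show ?thesis using dP_same[OF i _ a] dP_same[OF i _ b] c by simp
next
  case False then show ?thesis using dP_diff[OF k i False c a] dP_diff[OF k i False c b] by simp
qed

lemma sec_sub: "S \<subseteq> lex_V V HV \<Longrightarrow> sec S i \<subseteq> HV i"
  by (auto simp: sec_def lex_V_def)

lemma sec_res:
  assumes r: "local_resolving (lex_V V HV) (lex_E V E HV HE) (gdist (lex_V V HV) (lex_E V E HV HE)) S"
    and i: "i \<in> V"
  shows "local_resolving (HV i) (HE i) (gdist2 (HV i) (HE i)) (sec S i)"
  unfolding local_resolving_def
proof (intro conjI ballI impI)
  have SP: "S \<subseteq> lex_V V HV" using r by (simp add: local_resolving_def)
  then show "sec S i \<subseteq> HV i" by (rule sec_sub)
  fix a b assume a: "a \<in> HV i" and b: "b \<in> HV i" and e: "HE i a b"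
  have "(i, a) \<in> lex_V V HV" "(i, b) \<in> lex_V V HV" "lex_E V E HV HE (i, a) (i, b)"
    using i a b e by (auto simp: lex_V_def PE_iff)
  then obtain s where s: "s \<in> S" and d: "gdist (lex_V V HV) (lex_E V E HV HE) s (i, a) \<noteq> gdist (lex_V V HV) (lex_E V E HV HE) s (i, b)"
    using r unfolding local_resolving_def by blast
  obtain k c where kc: "s = (k, c)" by (cases s)
  have kcV: "k \<in> V" "c \<in> HV k" using SP s kc by (auto simp: lex_V_def)
  have "k = i \<and> gdist2 (HV i) (HE i) c a \<noteq> gdist2 (HV i) (HE i) c b"
    using same[OF i a b kcV] d kc by simp
  moreover have "c \<in> sec S i" using s kc calculation by (simp add: sec_def)
  ultimately show "\<exists>s\<in>sec S i. gdist2 (HV i) (HE i) s a \<noteq> gdist2 (HV i) (HE i) s b" by blast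
qed

lemma card_sec:
  assumes SP: "S \<subseteq> lex_V V HV" shows "card S = (\<Sum>i\<in>V. card (sec S i))"
proof -
  have "S = Sigma V (sec S)" using SP by (auto simp: lex_V_def sec_def)
  moreover have "\<forall>i\<in>V. finite (sec S i)" using sec_sub[OF SP] HVfin finite_subset by blast
  then have "card (Sigma V (sec S)) = (\<Sum>i\<in>V. card (sec S i))" by (rule card_SigmaI[OF finV])
  ultimately show ?thesis by simp
qed

lemma lower:
  assumes r: "local_resolving (lex_V V HV) (lex_E V E HV HE) (gdist (lex_V V HV) (lex_E V E HV HE)) S"
  shows "(\<Sum>i\<in>V. local_adj_dim (HV i) (HE i)) \<le> card S"
proof -
  have SP: "S \<subseteq> lex_V V HV" using r by (simp add: local_resolving_def)
  have "(\<Sum>i\<in>V. local_adj_dim (HV i) (HE i)) \<le> (\<Sum>i\<in>V. card (sec S i))"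
    by (rule sum_mono) (rule adim_le[OF sec_res[OF r]])
  then show ?thesis using card_sec[OF SP] by simp
qed

lemma dim_eq_iff:
  "local_metric_dim (lex_V V HV) (lex_E V E HV HE) = (\<Sum>i\<in>V. local_adj_dim (HV i) (HE i)) \<longleftrightarrow>
   (\<exists>S. local_resolving (lex_V V HV) (lex_E V E HV HE) (gdist (lex_V V HV) (lex_E V E HV HE)) S \<and>
        card S = (\<Sum>i\<in>V. local_adj_dim (HV i) (HE i)))"
proof -
  have "\<exists>k S. local_resolving (lex_V V HV) (lex_E V E HV HE) (gdist (lex_V V HV) (lex_E V E HV HE)) S \<and> card S = k"
    using self_res[of "lex_E V E HV HE" "lex_V V HV"] PE_irr by blast
  from LeastI_ex[OF this] obtain S0 where S0:
    "local_resolving (lex_V V HV) (lex_E V E HV HE) (gdist (lex_V V HV) (lex_E V E HV HE)) S0"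
    "card S0 = local_metric_dim (lex_V V HV) (lex_E V E HV HE)"
    unfolding local_metric_dim_def by blast
  show ?thesis
  proof
    assume "local_metric_dim (lex_V V HV) (lex_E V E HV HE) = (\<Sum>i\<in>V. local_adj_dim (HV i) (HE i))"
    then show "\<exists>S. local_resolving (lex_V V HV) (lex_E V E HV HE) (gdist (lex_V V HV) (lex_E V E HV HE)) S \<and>
        card S = (\<Sum>i\<in>V. local_adj_dim (HV i) (HE i))" using S0 by metis
  next
    assume "\<exists>S. local_resolving (lex_V V HV) (lex_E V E HV HE) (gdist (lex_V V HV) (lex_E V E HV HE)) S \<and>
        card S = (\<Sum>i\<in>V. local_adj_dim (HV i) (HE i))"
    then have "local_metric_dim (lex_V V HV) (lex_E V E HV HE) \<le> (\<Sum>i\<in>V. local_adj_dim (HV i) (HE i))"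
      unfolding local_metric_dim_def by (metis (mono_tags, lifting) Least_le)
    moreover have "(\<Sum>i\<in>V. local_adj_dim (HV i) (HE i)) \<le> local_metric_dim (lex_V V HV) (lex_E V E HV HE)"
      using lower[OF S0(1)] S0(2) by simp
    ultimately show "local_metric_dim (lex_V V HV) (lex_E V E HV HE) = (\<Sum>i\<in>V. local_adj_dim (HV i) (HE i))"
      by (rule antisym)
  qed
qed

lemma tight_basis:
  assumes r: "local_resolving (lex_V V HV) (lex_E V E HV HE) (gdist (lex_V V HV) (lex_E V E HV HE)) S"
    and cS: "card S = (\<Sum>i\<in>V. local_adj_dim (HV i) (HE i))" and i: "i \<in> V"
  shows "local_adj_basis (HV i) (HE i) (sec S i)"
proof (rule ccontr)
  assume nb: "\<not> local_adj_basis (HV i) (HE i) (sec S i)"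
  have SP: "S \<subseteq> lex_V V HV" using r by (simp add: local_resolving_def)
  have le: "\<forall>x\<in>V. local_adj_dim (HV x) (HE x) \<le> card (sec S x)"
    using adim_le[OF sec_res[OF r]] by blast
  have "local_adj_dim (HV i) (HE i) < card (sec S i)"
    using nb sec_res[OF r i] le i unfolding local_adj_basis_def by fastforce
  then have "(\<Sum>i\<in>V. local_adj_dim (HV i) (HE i)) < (\<Sum>i\<in>V. card (sec S i))"
    using sum_strict_mono_ex1[OF finV le] i by blast
  then show False using cS card_sec[OF SP] by simp
qed

end




lemma tt_trans: "true_twins V E x y \<Longrightarrow> true_twins V E x z \<Longrightarrow> true_twins V E y z"
  by (simp add: true_twins_def)

lemma tt_symm: "true_twins V E x y \<Longrightarrow> true_twins V E y x"
  by (simp add: true_twins_def)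

lemma tt_refl: "true_twins V E x x"
  by (simp add: true_twins_def)

context lexprod begin

lemma twin_dist2:
  assumes tt: "true_twins V E y1 y2" and k1: "k \<noteq> y1" and k2: "k \<noteq> y2"
  shows "gdist V E k y1 = gdist V E k y2"
proof -
  have "gdist V E y1 k = gdist V E y2 k" using twin_dist[OF gG tt] k1 k2 by metis
  then show ?thesis using gdist_sym[OF Esym] by metis
qed

lemma card_le1:
  assumes x: "x \<in> V"
  shows "card {y\<in>twin_class V E x. class_G (HV y) (HE y)} \<le> 1 \<longleftrightarrow>
    (\<forall>y1 y2. y1 \<in> V \<longrightarrow> y2 \<in> V \<longrightarrow> true_twins V E x y1 \<longrightarrow> true_twins V E x y2 \<longrightarrow>
       class_G (HV y1) (HE y1) \<longrightarrow> class_G (HV y2) (HE y2) \<longrightarrow> y1 = y2)"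
proof -
  have "finite {y\<in>twin_class V E x. class_G (HV y) (HE y)}"
    using finV by (rule finite_subset[rotated]) (auto simp: twin_class_def)
  from card_le_Suc0_iff_eq[OF this] show ?thesis by (auto simp: twin_class_def)
qed

lemma nec_b:
  assumes r: "local_resolving (lex_V V HV) (lex_E V E HV HE) (gdist (lex_V V HV) (lex_E V E HV HE)) S"
    and cS: "card S = (\<Sum>i\<in>V. local_adj_dim (HV i) (HE i))"
    and y1: "y1 \<in> V" and y2: "y2 \<in> V" and tt: "true_twins V E y1 y2"
    and g1: "class_G (HV y1) (HE y1)" and g2: "class_G (HV y2) (HE y2)"
  shows "y1 = y2"
proof (rule ccontr)
  assume ne: "y1 \<noteq> y2"
  have e: "E y1 y2" using tt_adj[OF tt ne y2] .
  obtain a where a: "a \<in> HV y1" "sec S y1 \<subseteq> open_nbhd (HV y1) (HE y1) a"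
    using g1 tight_basis[OF r cS y1] unfolding class_G_def by blast
  obtain b where b: "b \<in> HV y2" "sec S y2 \<subseteq> open_nbhd (HV y2) (HE y2) b"
    using g2 tight_basis[OF r cS y2] unfolding class_G_def by blast
  have "(y1, a) \<in> lex_V V HV" "(y2, b) \<in> lex_V V HV" "lex_E V E HV HE (y1, a) (y2, b)"
    using y1 y2 a b e by (auto simp: lex_V_def PE_iff)
  then obtain s where s: "s \<in> S" and d: "gdist (lex_V V HV) (lex_E V E HV HE) s (y1, a) \<noteq> gdist (lex_V V HV) (lex_E V E HV HE) s (y2, b)"
    using r unfolding local_resolving_def by blast
  obtain k c where kc: "s = (k, c)" by (cases s)
  have SP: "S \<subseteq> lex_V V HV" using r by (simp add: local_resolving_def)
  have kcV: "k \<in> V" "c \<in> HV k" using SP s kc by (auto simp: lex_V_def)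
  have cs: "c \<in> sec S k" using s kc by (simp add: sec_def)
  have alt: "(k \<noteq> y1 \<and> k \<noteq> y2 \<and> gdist V E k y1 \<noteq> gdist V E k y2) \<or> (k = y1 \<and> \<not> HE y1 c a) \<or> (k = y2 \<and> \<not> HE y2 c b)"
    using cross[OF y1 y2 e a(1) b(1) kcV] d kc by simp
  then show False
  proof (elim disjE conjE)
    assume "k \<noteq> y1" "k \<noteq> y2" "gdist V E k y1 \<noteq> gdist V E k y2"
    then show False using twin_dist2[OF tt] by blast
  next
    assume k: "k = y1" and n: "\<not> HE y1 c a"
    have "HE y1 a c" using a(2) cs k by (auto simp: open_nbhd_def)
    then show False using n HEsym[OF y1] by blast
  next
    assume k: "k = y2" and n: "\<not> HE y2 c b"
    have "HE y2 b c" using b(2) cs k by (auto simp: open_nbhd_def)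
    then show False using n HEsym[OF y2] by blast
  qed
qed

lemma nec_a:
  assumes r: "local_resolving (lex_V V HV) (lex_E V E HV HE) (gdist (lex_V V HV) (lex_E V E HV HE)) S"
    and cS: "card S = (\<Sum>i\<in>V. local_adj_dim (HV i) (HE i))"
    and y1: "y1 \<in> V" and y2: "y2 \<in> V" and e: "E y1 y2"
    and g1: "class_G (HV y1) (HE y1)" and g2: "class_G (HV y2) (HE y2)"
  shows "\<exists>k\<in>V. k \<noteq> y1 \<and> k \<noteq> y2 \<and> \<not> edgeless (HV k) (HE k) \<and> gdist V E k y1 \<noteq> gdist V E k y2"
proof -
  obtain a where a: "a \<in> HV y1" "sec S y1 \<subseteq> open_nbhd (HV y1) (HE y1) a"
    using g1 tight_basis[OF r cS y1] unfolding class_G_def by blast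
  obtain b where b: "b \<in> HV y2" "sec S y2 \<subseteq> open_nbhd (HV y2) (HE y2) b"
    using g2 tight_basis[OF r cS y2] unfolding class_G_def by blast
  have "(y1, a) \<in> lex_V V HV" "(y2, b) \<in> lex_V V HV" "lex_E V E HV HE (y1, a) (y2, b)"
    using y1 y2 a b e by (auto simp: lex_V_def PE_iff)
  then obtain s where s: "s \<in> S" and d: "gdist (lex_V V HV) (lex_E V E HV HE) s (y1, a) \<noteq> gdist (lex_V V HV) (lex_E V E HV HE) s (y2, b)"
    using r unfolding local_resolving_def by blast
  obtain k c where kc: "s = (k, c)" by (cases s)
  have SP: "S \<subseteq> lex_V V HV" using r by (simp add: local_resolving_def)
  have kcV: "k \<in> V" "c \<in> HV k" using SP s kc by (auto simp: lex_V_def)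
  have cs: "c \<in> sec S k" using s kc by (simp add: sec_def)
  have alt: "(k \<noteq> y1 \<and> k \<noteq> y2 \<and> gdist V E k y1 \<noteq> gdist V E k y2) \<or> (k = y1 \<and> \<not> HE y1 c a) \<or> (k = y2 \<and> \<not> HE y2 c b)"
    using cross[OF y1 y2 e a(1) b(1) kcV] d kc by simp
  have "\<not> (k = y1 \<and> \<not> HE y1 c a)"
  proof
    assume k: "k = y1 \<and> \<not> HE y1 c a"
    have "HE y1 a c" using a(2) cs k by (auto simp: open_nbhd_def)
    then show False using k HEsym[OF y1] by blast
  qed
  moreover have "\<not> (k = y2 \<and> \<not> HE y2 c b)"
  proof
    assume k: "k = y2 \<and> \<not> HE y2 c b"
    have "HE y2 b c" using b(2) cs k by (auto simp: open_nbhd_def)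
    then show False using k HEsym[OF y2] by blast
  qed
  ultimately have k: "k \<noteq> y1" "k \<noteq> y2" "gdist V E k y1 \<noteq> gdist V E k y2" using alt by blast+
  have "\<not> edgeless (HV k) (HE k)"
  proof
    assume "edgeless (HV k) (HE k)"
    then have "sec S k = {}" using edgeless_basis_empty[OF Hg[rule_format, OF kcV(1)] _ tight_basis[OF r cS kcV(1)]] by blast
    then show False using cs by blast
  qed
  then show ?thesis using k kcV by blast
qed

end




context lexprod begin

lemma choose_basis:
  assumes i: "i \<in> V"
  shows "\<exists>B. local_adj_basis (HV i) (HE i) B \<and>
     (\<not> class_G (HV i) (HE i) \<longrightarrow> (\<forall>v\<in>HV i. \<not> B \<subseteq> open_nbhd (HV i) (HE i) v))"
proof (cases "class_G (HV i) (HE i)")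
  case True then show ?thesis using basis_ex[OF Hg[rule_format, OF i]] by blast
next
  case False then show ?thesis unfolding class_G_def by blast
qed

lemma suff:
  assumes A: "\<forall>ui\<in>{u\<in>V. class_G (HV u) (HE u)}. \<forall>uj\<in>{u\<in>V. class_G (HV u) (HE u)}.
        E ui uj \<and> \<not> true_twins V E ui uj \<longrightarrow>
        (\<exists>u\<in>V - ({u\<in>V - twin_set V E. edgeless (HV u) (HE u)} \<union> {ui, uj}).
           gdist V E u ui \<noteq> gdist V E u uj)"
    and Bc: "\<forall>x\<in>V. card {y\<in>twin_class V E x. class_G (HV y) (HE y)} \<le> 1"
  shows "\<exists>S. local_resolving (lex_V V HV) (lex_E V E HV HE) (gdist (lex_V V HV) (lex_E V E HV HE)) S \<and>
        card S = (\<Sum>i\<in>V. local_adj_dim (HV i) (HE i))"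
proof -
  define B where "B i = (SOME B. local_adj_basis (HV i) (HE i) B \<and>
     (\<not> class_G (HV i) (HE i) \<longrightarrow> (\<forall>v\<in>HV i. \<not> B \<subseteq> open_nbhd (HV i) (HE i) v)))" for i
  have Bp: "local_adj_basis (HV i) (HE i) (B i) \<and>
     (\<not> class_G (HV i) (HE i) \<longrightarrow> (\<forall>v\<in>HV i. \<not> B i \<subseteq> open_nbhd (HV i) (HE i) v))" if "i \<in> V" for i
    unfolding B_def by (rule someI_ex[OF choose_basis[OF that]])
  have Bsub: "B i \<subseteq> HV i" if "i \<in> V" for i
    using Bp[OF that] by (simp add: local_adj_basis_def local_resolving_def)
  have Bres: "local_resolving (HV i) (HE i) (gdist2 (HV i) (HE i)) (B i)" if "i \<in> V" for i
    using Bp[OF that] by (simp add: local_adj_basis_def)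
  have Bcard: "card (B i) = local_adj_dim (HV i) (HE i)" if "i \<in> V" for i
    using Bp[OF that] by (simp add: local_adj_basis_def)
  have Bfin: "\<forall>i\<in>V. finite (B i)" using Bsub HVfin finite_subset by blast
  have uniq: "y1 = y2" if "x \<in> V" "y1 \<in> V" "y2 \<in> V" "true_twins V E x y1" "true_twins V E x y2"
     "class_G (HV y1) (HE y1)" "class_G (HV y2) (HE y2)" for x y1 y2
    using Bc card_le1 that by blast
  let ?S = "Sigma V B"
  have good: "\<exists>s\<in>?S. gdist (lex_V V HV) (lex_E V E HV HE) s (i, a) \<noteq> gdist (lex_V V HV) (lex_E V E HV HE) s (j, b)"
    if ij: "i \<in> V" "j \<in> V" "E i j" "a \<in> HV i" "b \<in> HV j" and k: "k \<in> V" "k \<noteq> i" "k \<noteq> j"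
      "\<not> edgeless (HV k) (HE k)" "gdist V E k i \<noteq> gdist V E k j" for i j a b k
  proof -
    have "B k \<noteq> {}" using nonedgeless_basis_ne[OF k(4)] Bp[OF k(1)] by blast
    then obtain c where c: "c \<in> B k" by blast
    then have "c \<in> HV k" using Bsub[OF k(1)] by blast
    then have "gdist (lex_V V HV) (lex_E V E HV HE) (k, c) (i, a) \<noteq> gdist (lex_V V HV) (lex_E V E HV HE) (k, c) (j, b)"
      using cross[OF ij k(1)] k by blast
    then show ?thesis using c k(1) by blast
  qed
  have res: "local_resolving (lex_V V HV) (lex_E V E HV HE) (gdist (lex_V V HV) (lex_E V E HV HE)) ?S"
    unfolding local_resolving_def
  proof (intro conjI ballI impI)
    show "?S \<subseteq> lex_V V HV" using Bsub by (auto simp: lex_V_def)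
    fix x y assume "x \<in> lex_V V HV" "y \<in> lex_V V HV" and xy: "lex_E V E HV HE x y"
    obtain i a where x: "x = (i, a)" by (cases x)
    obtain j b where y: "y = (j, b)" by (cases y)
    have ia: "i \<in> V" "a \<in> HV i" "j \<in> V" "b \<in> HV j" and eo: "E i j \<or> (i = j \<and> HE i a b)"
      using xy x y by (simp_all add: PE_iff)
    show "\<exists>s\<in>?S. gdist (lex_V V HV) (lex_E V E HV HE) s x \<noteq> gdist (lex_V V HV) (lex_E V E HV HE) s y"
    proof (cases "E i j")
      case False
      then have ij: "i = j" "HE i a b" using eo by auto
      obtain c where c: "c \<in> B i" "gdist2 (HV i) (HE i) c a \<noteq> gdist2 (HV i) (HE i) c b"
        using Bres[OF ia(1)] ia ij unfolding local_resolving_def by blast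
      have "c \<in> HV i" using c Bsub[OF ia(1)] by blast
      then have "gdist (lex_V V HV) (lex_E V E HV HE) (i, c) (i, a) \<noteq> gdist (lex_V V HV) (lex_E V E HV HE) (i, c) (i, b)"
        using same[OF ia(1) ia(2) _ ia(1)] ia ij c by simp
      then show ?thesis using x y ij c(1) ia(1) by blast
    next
      case e: True
      have ne: "i \<noteq> j" using e Eirr by blast
      show ?thesis
      proof (cases "class_G (HV i) (HE i)")
        case False
        then obtain c where c: "c \<in> B i" "c \<notin> open_nbhd (HV i) (HE i) a" using Bp[OF ia(1)] ia(2) by blast
        have cH: "c \<in> HV i" using c Bsub[OF ia(1)] by blast
        then have "\<not> HE i c a" using c(2) HEsym[OF ia(1)] by (auto simp: open_nbhd_def)
        then have "gdist (lex_V V HV) (lex_E V E HV HE) (i, c) (i, a) \<noteq> gdist (lex_V V HV) (lex_E V E HV HE) (i, c) (j, b)"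
          using cross[OF ia(1) ia(3) e ia(2) ia(4) ia(1) cH] by blast
        then show ?thesis using x y c(1) ia(1) by blast
      next
        case gi: True
        show ?thesis
        proof (cases "class_G (HV j) (HE j)")
          case False
          then obtain c where c: "c \<in> B j" "c \<notin> open_nbhd (HV j) (HE j) b" using Bp[OF ia(3)] ia(4) by blast
          have cH: "c \<in> HV j" using c Bsub[OF ia(3)] by blast
          then have "\<not> HE j c b" using c(2) HEsym[OF ia(3)] by (auto simp: open_nbhd_def)
          then have "gdist (lex_V V HV) (lex_E V E HV HE) (j, c) (i, a) \<noteq> gdist (lex_V V HV) (lex_E V E HV HE) (j, c) (j, b)"
            using cross[OF ia(1) ia(3) e ia(2) ia(4) ia(3) cH] by blast
          then show ?thesis using x y c(1) ia(3) by blast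
        next
          case gj: True
          have ntt: "\<not> true_twins V E i j"
            using uniq[OF ia(1) ia(1) ia(3) tt_refl _ gi gj] ne by blast
          obtain u where u: "u \<in> V" "u \<notin> {u\<in>V - twin_set V E. edgeless (HV u) (HE u)}" "u \<noteq> i" "u \<noteq> j"
            "gdist V E u i \<noteq> gdist V E u j"
            using A ia(1) ia(3) gi gj e ntt by blast
          show ?thesis
          proof (cases "edgeless (HV u) (HE u)")
            case False
            then show ?thesis using good[OF ia(1) ia(3) e ia(2) ia(4) u(1) u(3) u(4) False u(5)] x y by simp
          next
            case True
            then have "u \<in> twin_set V E" using u(1,2) by blast
            then obtain z where z: "z \<in> V" "card (twin_class V E z) \<ge> 2" "u \<in> twin_class V E z"
              unfolding twin_set_def by blast
            have "\<not> twin_class V E z \<subseteq> {u}"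
            proof
              assume "twin_class V E z \<subseteq> {u}"
              then have "card (twin_class V E z) \<le> card {u}" by (intro card_mono) auto
              then show False using z(2) by simp
            qed
            then obtain u' where u': "u' \<in> twin_class V E z" "u' \<noteq> u" by blast
            have u'V: "u' \<in> V" "true_twins V E z u'" using u' by (simp_all add: twin_class_def)
            have zu: "true_twins V E z u" using z(3) by (simp add: twin_class_def)
            have gu: "class_G (HV u) (HE u)" using edgeless_classG[OF Hg[rule_format, OF u(1)] True] .
            have u'i: "u' \<noteq> i"
            proof
              assume "u' = i"
              then have "u = i" using uniq[OF z(1) u(1) ia(1) zu _ gu gi] u'V by simp
              then show False using u(3) by simp
            qed
            have u'j: "u' \<noteq> j"
            proof
              assume "u' = j"
              then have "u = j" using uniq[OF z(1) u(1) ia(3) zu _ gu gj] u'V by simp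
              then show False using u(4) by simp
            qed
            have ne': "\<not> edgeless (HV u') (HE u')"
            proof
              assume "edgeless (HV u') (HE u')"
              then have "class_G (HV u') (HE u')" using edgeless_classG Hg u'V(1) by blast
              then have "u = u'" using uniq[OF z(1) u(1) u'V(1) zu u'V(2) gu] by simp
              then show False using u'(2) by simp
            qed
            have tuu: "true_twins V E u u'" using tt_trans[OF zu u'V(2)] .
            have "gdist V E u i = gdist V E u' i" using twin_dist[OF gG tuu] u(3) u'i by metis
            moreover have "gdist V E u j = gdist V E u' j" using twin_dist[OF gG tuu] u(4) u'j by metis
            ultimately have "gdist V E u' i \<noteq> gdist V E u' j" using u(5) by simp
            then show ?thesis using good[OF ia(1) ia(3) e ia(2) ia(4) u'V(1) u'i u'j ne'] x y by simp
          qed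
        qed
      qed
    qed
  qed
  have "card ?S = (\<Sum>i\<in>V. card (B i))" by (rule card_SigmaI[OF finV Bfin])
  also have "\<dots> = (\<Sum>i\<in>V. local_adj_dim (HV i) (HE i))" using Bcard by (intro sum.cong) auto
  finally show ?thesis using res by blast
qed

lemma main:
  "local_metric_dim (lex_V V HV) (lex_E V E HV HE) = (\<Sum>u\<in>V. local_adj_dim (HV u) (HE u))
    \<longleftrightarrow>
    ((\<forall>ui\<in>{u\<in>V. class_G (HV u) (HE u)}. \<forall>uj\<in>{u\<in>V. class_G (HV u) (HE u)}.
        E ui uj \<and> \<not> true_twins V E ui uj \<longrightarrow>
        (\<exists>u\<in>V - ({u\<in>V - twin_set V E. edgeless (HV u) (HE u)} \<union> {ui, uj}).
           gdist V E u ui \<noteq> gdist V E u uj))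
     \<and> (\<forall>x\<in>V. card {y\<in>twin_class V E x. class_G (HV y) (HE y)} \<le> 1))"
proof
  assume "local_metric_dim (lex_V V HV) (lex_E V E HV HE) = (\<Sum>u\<in>V. local_adj_dim (HV u) (HE u))"
  then obtain S where r: "local_resolving (lex_V V HV) (lex_E V E HV HE) (gdist (lex_V V HV) (lex_E V E HV HE)) S"
    and cS: "card S = (\<Sum>i\<in>V. local_adj_dim (HV i) (HE i))" using dim_eq_iff by blast
  show "(\<forall>ui\<in>{u\<in>V. class_G (HV u) (HE u)}. \<forall>uj\<in>{u\<in>V. class_G (HV u) (HE u)}.
        E ui uj \<and> \<not> true_twins V E ui uj \<longrightarrow>
        (\<exists>u\<in>V - ({u\<in>V - twin_set V E. edgeless (HV u) (HE u)} \<union> {ui, uj}).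
           gdist V E u ui \<noteq> gdist V E u uj))
     \<and> (\<forall>x\<in>V. card {y\<in>twin_class V E x. class_G (HV y) (HE y)} \<le> 1)"
  proof (intro conjI ballI impI)
    fix ui uj assume ui: "ui \<in> {u\<in>V. class_G (HV u) (HE u)}" and uj: "uj \<in> {u\<in>V. class_G (HV u) (HE u)}"
      and e: "E ui uj \<and> \<not> true_twins V E ui uj"
    obtain k where k: "k \<in> V" "k \<noteq> ui" "k \<noteq> uj" "\<not> edgeless (HV k) (HE k)" "gdist V E k ui \<noteq> gdist V E k uj"
      using nec_a[OF r cS _ _ _ _ _] ui uj e by blast
    then show "\<exists>u\<in>V - ({u\<in>V - twin_set V E. edgeless (HV u) (HE u)} \<union> {ui, uj}).
           gdist V E u ui \<noteq> gdist V E u uj" by blast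
  next
    fix x assume x: "x \<in> V"
    show "card {y\<in>twin_class V E x. class_G (HV y) (HE y)} \<le> 1"
      unfolding card_le1[OF x]
    proof (intro allI impI)
      fix y1 y2 assume "y1 \<in> V" "y2 \<in> V" "true_twins V E x y1" "true_twins V E x y2"
        "class_G (HV y1) (HE y1)" "class_G (HV y2) (HE y2)"
      then show "y1 = y2" using nec_b[OF r cS] tt_trans by metis
    qed
  qed
next
  assume "(\<forall>ui\<in>{u\<in>V. class_G (HV u) (HE u)}. \<forall>uj\<in>{u\<in>V. class_G (HV u) (HE u)}.
        E ui uj \<and> \<not> true_twins V E ui uj \<longrightarrow>
        (\<exists>u\<in>V - ({u\<in>V - twin_set V E. edgeless (HV u) (HE u)} \<union> {ui, uj}).
           gdist V E u ui \<noteq> gdist V E u uj))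
     \<and> (\<forall>x\<in>V. card {y\<in>twin_class V E x. class_G (HV y) (HE y)} \<le> 1)"
  then show "local_metric_dim (lex_V V HV) (lex_E V E HV HE) = (\<Sum>u\<in>V. local_adj_dim (HV u) (HE u))"
    using suff dim_eq_iff by blast
qed

end

theorem corollary3:
  fixes V :: "'a set" and E :: "'a \<Rightarrow> 'a \<Rightarrow> bool"
    and HV :: "'a \<Rightarrow> 'b set" and HE :: "'a \<Rightarrow> 'b \<Rightarrow> 'b \<Rightarrow> bool"
  assumes "connected_graph V E" and "card V \<ge> 2"
    and "\<forall>u\<in>V. graph (HV u) (HE u)"
  shows "local_metric_dim (lex_V V HV) (lex_E V E HV HE) = (\<Sum>u\<in>V. local_adj_dim (HV u) (HE u))
    \<longleftrightarrow>
    ((\<forall>ui\<in>{u\<in>V. class_G (HV u) (HE u)}. \<forall>uj\<in>{u\<in>V. class_G (HV u) (HE u)}.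
        E ui uj \<and> \<not> true_twins V E ui uj \<longrightarrow>
        (\<exists>u\<in>V - ({u\<in>V - twin_set V E. edgeless (HV u) (HE u)} \<union> {ui, uj}).
           gdist V E u ui \<noteq> gdist V E u uj))
     \<and> (\<forall>x\<in>V. card {y\<in>twin_class V E x. class_G (HV y) (HE y)} \<le> 1))"
proof -
  interpret lexprod V E HV HE using assms by unfold_locales
  show ?thesis by (rule main)
qed



end
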